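(* If $(\mathcal{F},P)$ is a fan poset, then $P$ orients the 1-skeleton of the dual sphere $\Gamma$ of $\mathcal{F}$; that is, identifying each element of $P$ (a maximal cone of $\mathcal{F}$) with the corresponding vertex of $\Gamma$, the Hasse diagram of $P$ is isomorphic as a graph to the 1-skeleton of $\Gamma$.
   Context: A fan in $\mathbb{R}^d$ is a family of nonempty closed polyhedral cones closed under nonempty faces, any two meeting in a face of each; it is complete if its union is $\mathbb{R}^d$. A fan poset $(\mathcal{F},P)$ is a complete fan with a partial order $P$ on its maximal cones such that (a) for each interval $I$ of $P$ the union of cones in $I$ is a polyhedral cone, and (b) for each cone $C$ of $\mathcal{F}$ the set of maximal cones containing $C$ is an interval of $P$. The dual sphere $\Gamma$ of a complete fan $\mathcal{F}$ is the regular CW sphere whose face poset, with a maximum element adjoined, is dual to the face lattice of $\mathcal{F}$ (cones ordered by inclusion, with a top adjoined); its vertices correspond to maximal cones of $\mathcal{F}$ and its edges to $(d-1)$-dimensional cones of $\mathcal{F}$, an edge joining the two maximal cones containing that cone. *)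

theory Defs
  imports "HOL-Analysis.Analysis"
begin

definition polyhedral_cone :: "'a::euclidean_space set \<Rightarrow> bool" where
  "polyhedral_cone C \<longleftrightarrow> (\<exists>A. finite A \<and> C = {x. \<forall>a\<in>A. a \<bullet> x \<le> 0})"

definition fan :: "'a::euclidean_space set set \<Rightarrow> bool" where
  "fan F \<longleftrightarrow> finite F
     \<and> (\<forall>C\<in>F. C \<noteq> {} \<and> polyhedral_cone C)
     \<and> (\<forall>C\<in>F. \<forall>G. G face_of C \<and> G \<noteq> {} \<longrightarrow> G \<in> F)
     \<and> (\<forall>C\<in>F. \<forall>D\<in>F. (C \<inter> D) face_of C \<and> (C \<inter> D) face_of D)"

definition complete_fan :: "'a::euclidean_space set set \<Rightarrow> bool" where
  "complete_fan F \<longleftrightarrow> fan F \<and> \<Union>F = UNIV"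

definition max_cones :: "'a set set \<Rightarrow> 'a set set" where
  "max_cones F = {C\<in>F. \<forall>D\<in>F. C \<subseteq> D \<longrightarrow> D = C}"

definition interval :: "('b \<times> 'b) set \<Rightarrow> 'b \<Rightarrow> 'b \<Rightarrow> 'b set" where
  "interval P x y = {z. (x, z) \<in> P \<and> (z, y) \<in> P}"

definition is_interval :: "('b \<times> 'b) set \<Rightarrow> 'b set \<Rightarrow> bool" where
  "is_interval P I \<longleftrightarrow> (\<exists>x y. (x, y) \<in> P \<and> I = interval P x y)"

definition fan_poset :: "'a::euclidean_space set set \<Rightarrow> ('a set \<times> 'a set) set \<Rightarrow> bool" where
  "fan_poset F P \<longleftrightarrow> complete_fan F
     \<and> partial_order_on (max_cones F) P
     \<and> (\<forall>I. is_interval P I \<longrightarrow> polyhedral_cone (\<Union>I))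
     \<and> (\<forall>C\<in>F. is_interval P {M \<in> max_cones F. C \<subseteq> M})"

definition covers :: "('b \<times> 'b) set \<Rightarrow> 'b \<Rightarrow> 'b \<Rightarrow> bool" where
  "covers P x y \<longleftrightarrow> (x, y) \<in> P \<and> x \<noteq> y \<and> \<not> (\<exists>z. (x, z) \<in> P \<and> (z, y) \<in> P \<and> z \<noteq> x \<and> z \<noteq> y)"

definition hasse_adjacent :: "('b \<times> 'b) set \<Rightarrow> 'b \<Rightarrow> 'b \<Rightarrow> bool" where
  "hasse_adjacent P x y \<longleftrightarrow> covers P x y \<or> covers P y x"

text \<open>Edges of the 1-skeleton of the dual sphere of a complete fan: its vertices are the
  maximal cones, and each (d-1)-dimensional cone of the fan gives an edge joining the
  two maximal cones containing it.\<close>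
definition dual_adjacent :: "'a::euclidean_space set set \<Rightarrow> 'a set \<Rightarrow> 'a set \<Rightarrow> bool" where
  "dual_adjacent F M N \<longleftrightarrow> M \<in> max_cones F \<and> N \<in> max_cones F \<and> M \<noteq> N
     \<and> (\<exists>C\<in>F. aff_dim C = int DIM('a) - 1 \<and> C \<subseteq> M \<and> C \<subseteq> N)"

end

theory Submission imports Defs begin
lemma pc_props:
  assumes "polyhedral_cone (C::'a::euclidean_space set)"
  shows "closed C" "convex C" "0 \<in> C"
proof -
  obtain A where A: "finite A" "C = {x. \<forall>a\<in>A. a \<bullet> x \<le> 0}"
    using assms unfolding polyhedral_cone_def by blast
  have eq: "C = (\<Inter>a\<in>A. {x. a \<bullet> x \<le> 0})" using A by auto
  show "closed C" unfolding eq by (intro closed_INT) (simp add: closed_halfspace_le)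
  show "convex C" unfolding eq by (intro convex_INT) (simp add: convex_halfspace_le)
  show "0 \<in> C" using A by auto
qed

lemma fan_finite: "fan F \<Longrightarrow> finite F"
  unfolding fan_def by blast

lemma fan_props:
  assumes "fan F" "C \<in> F"
  shows "closed C" "convex C" "0 \<in> C" "C \<noteq> {}"
proof -
  have "polyhedral_cone C" using assms unfolding fan_def by blast
  then show "closed C" "convex C" "0 \<in> C" using pc_props by blast+
  then show "C \<noteq> {}" by blast
qed

lemma fan_inter_face:
  assumes "fan F" "C \<in> F" "D \<in> F"
  shows "(C \<inter> D) face_of C" "(C \<inter> D) face_of D" "C \<inter> D \<in> F"
proof -
  have h: "\<forall>C\<in>F. \<forall>D\<in>F. (C \<inter> D) face_of C \<and> (C \<inter> D) face_of D"
    and h2: "\<forall>C\<in>F. \<forall>G. G face_of C \<and> G \<noteq> {} \<longrightarrow> G \<in> F"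
    using assms(1) unfolding fan_def by blast+
  show 1: "(C \<inter> D) face_of C" "(C \<inter> D) face_of D" using h assms(2,3) by blast+
  have "0 \<in> C" "0 \<in> D" using fan_props(3) assms by blast+
  then have "C \<inter> D \<noteq> {}" by blast
  then show "C \<inter> D \<in> F" using h2 assms(2) 1(1) by blast
qed

lemma local_cover:
  assumes "complete_fan F"
  shows "\<exists>r>0. \<forall>y\<in>ball x r. \<exists>G\<in>F. x \<in> G \<and> y \<in> G"
proof -
  have fan: "fan F" and U: "\<Union>F = UNIV" using assms unfolding complete_fan_def by auto
  let ?U = "\<Union>{G\<in>F. x \<notin> G}"
  have "finite {G\<in>F. x \<notin> G}" using fan_finite[OF fan] by simp
  moreover have "\<forall>G\<in>{G\<in>F. x \<notin> G}. closed G" using fan_props(1)[OF fan] by blast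
  ultimately have "closed ?U" by (intro closed_Union) auto
  then have "open (- ?U)" by auto
  moreover have "x \<in> - ?U" by auto
  ultimately obtain r where r: "r > 0" "ball x r \<subseteq> - ?U" using open_contains_ball by blast
  have "\<forall>y\<in>ball x r. \<exists>G\<in>F. x \<in> G \<and> y \<in> G"
  proof
    fix y assume y: "y \<in> ball x r"
    obtain G where "G \<in> F" "y \<in> G" using U by blast
    then show "\<exists>G\<in>F. x \<in> G \<and> y \<in> G" using r y by blast
  qed
  then show ?thesis using r by blast
qed

lemma relint_sub:
  assumes "fan F" "C \<in> F" "x \<in> rel_interior C" "G \<in> F" "x \<in> G"
  shows "C \<subseteq> G"
proof -
  have "(C \<inter> G) face_of C" using fan_inter_face assms by blast
  moreover have "x \<in> C" using assms(3) rel_interior_subset by blast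
  then have "(C \<inter> G) \<inter> rel_interior C \<noteq> {}" using assms(3,5) by blast
  ultimately have "C \<subseteq> C \<inter> G" using subset_of_face_of[OF _ order_refl] by blast
  then show ?thesis by blast
qed

lemma below_max:
  assumes "fan F" "G \<in> F"
  shows "\<exists>K\<in>max_cones F. G \<subseteq> K"
proof -
  have "finite {D\<in>F. G \<subseteq> D}" using fan_finite[OF assms(1)] by simp
  moreover have "{D\<in>F. G \<subseteq> D} \<noteq> {}" using assms by auto
  ultimately obtain m where m: "m \<in> {D\<in>F. G \<subseteq> D}" "\<forall>b\<in>{D\<in>F. G \<subseteq> D}. m \<le> b \<longrightarrow> m = b"
    using finite_has_maximal[of "{D\<in>F. G \<subseteq> D}"] by blast
  then have "m \<in> max_cones F" unfolding max_cones_def by auto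
  then show ?thesis using m by auto
qed

lemma max_interior:
  assumes "complete_fan F" "K \<in> max_cones F"
  shows "interior K \<noteq> {}"
proof -
  have fan: "fan F" using assms unfolding complete_fan_def by auto
  have KF: "K \<in> F" using assms unfolding max_cones_def by auto
  have "rel_interior K \<noteq> {}" using fan_props(2,4)[OF fan KF] rel_interior_eq_empty by blast
  then obtain x where x: "x \<in> rel_interior K" by blast
  obtain r where r: "r > 0" "\<forall>y\<in>ball x r. \<exists>G\<in>F. x \<in> G \<and> y \<in> G"
    using local_cover[OF assms(1)] by blast
  have "ball x r \<subseteq> K"
  proof
    fix y assume "y \<in> ball x r"
    then obtain G where G: "G \<in> F" "x \<in> G" "y \<in> G" using r by blast
    have "K \<subseteq> G" using relint_sub[OF fan KF x G(1,2)] .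
    then have "G = K" using assms(2) G unfolding max_cones_def by auto
    then show "y \<in> K" using G by simp
  qed
  then have "x \<in> interior K" unfolding mem_interior using r(1) by blast
  then show ?thesis by (metis empty_iff)
qed

lemma cover_dual:
  fixes F :: "'a::euclidean_space set set"
  assumes fp: "fan_poset F P" and cov: "covers P M N"
  shows "dual_adjacent F M N"
proof -
  have cf: "complete_fan F" and po: "partial_order_on (max_cones F) P"
    and ia: "\<forall>I. is_interval P I \<longrightarrow> polyhedral_cone (\<Union>I)"
    using fp unfolding fan_poset_def by blast+
  have fan: "fan F" using cf unfolding complete_fan_def by blast
  have MN: "(M, N) \<in> P" "M \<noteq> N" using cov unfolding covers_def by auto
  have sub: "P \<subseteq> max_cones F \<times> max_cones F" and rf: "refl_on (max_cones F) P"
    using partial_order_onD[OF po] by auto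
  have Mm: "M \<in> max_cones F" and Nm: "N \<in> max_cones F" using sub MN by auto
  have MF: "M \<in> F" and NF: "N \<in> F" using Mm Nm unfolding max_cones_def by auto
  have "interval P M N = {M, N}"
  proof
    show "interval P M N \<subseteq> {M, N}" using cov unfolding covers_def interval_def by auto
    show "{M, N} \<subseteq> interval P M N" using rf Mm Nm MN unfolding interval_def refl_on_def by auto
  qed
  then have "is_interval P {M, N}" unfolding is_interval_def using MN
    by (intro exI[of _ M] exI[of _ N]) simp
  then have "polyhedral_cone (\<Union>{M, N})" using ia by blast
  then have "polyhedral_cone (M \<union> N)" by simp
  then have cvx: "convex (M \<union> N)" using pc_props(2) by blast
  define G where "G = M \<inter> N"
  have GF: "G \<in> F" and GM: "G face_of M" and GN: "G face_of N"
    using fan_inter_face[OF fan MF NF] unfolding G_def by auto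
  have cM: "convex M" "closed M" using fan_props(1,2)[OF fan MF] by auto
  have cN: "convex N" "closed N" using fan_props(1,2)[OF fan NF] by auto
  have up: "aff_dim G \<le> int DIM('a) - 1"
  proof (rule ccontr)
    assume "\<not> ?thesis"
    then have g: "aff_dim G \<ge> int DIM('a)" by simp
    have "G = M"
    proof (rule ccontr)
      assume "G \<noteq> M"
      then have "aff_dim G < aff_dim M" using face_of_aff_dim_lt[OF cM(1) GM] by blast
      then show False using g aff_dim_le_DIM[of M] by simp
    qed
    moreover have "G = N"
    proof (rule ccontr)
      assume "G \<noteq> N"
      then have "aff_dim G < aff_dim N" using face_of_aff_dim_lt[OF cN(1) GN] by blast
      then show False using g aff_dim_le_DIM[of N] by simp
    qed
    ultimately show False using MN by simp
  qed
  obtain p where p: "p \<in> interior M" using max_interior[OF cf Mm] by blast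
  then obtain e where e: "e > 0" "ball p e \<subseteq> M" using mem_interior by blast
  obtain q where q: "q \<in> interior N" using max_interior[OF cf Nm] by blast
  have qM: "q \<notin> M"
  proof
    assume "q \<in> M"
    then have "q \<in> G" using q interior_subset unfolding G_def by blast
    moreover have "q \<in> rel_interior N" using q interior_subset_rel_interior by blast
    ultimately have "N \<subseteq> G" using subset_of_face_of[OF GN order_refl] by blast
    then have "N \<subseteq> M" unfolding G_def by blast
    then have "M = N" using Nm MF unfolding max_cones_def by blast
    then show False using MN by simp
  qed
  have ballsub: "ball p e \<subseteq> affine hull (insert q G)"
  proof
    fix p' assume p': "p' \<in> ball p e"
    then have p'M: "p' \<in> M" using e by blast
    have qN: "q \<in> N" using q interior_subset by blast
    have segsub: "closed_segment p' q \<subseteq> M \<union> N"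
      using cvx p'M qN by (simp add: closed_segment_subset)
    have "connected (closed_segment p' q)" by (rule connected_segment)
    moreover have "M \<inter> closed_segment p' q \<noteq> {}" "N \<inter> closed_segment p' q \<noteq> {}"
      using p'M qN ends_in_segment by blast+
    ultimately have "M \<inter> N \<inter> closed_segment p' q \<noteq> {}"
      using connected_closed[of "closed_segment p' q"] cM(2) cN(2) segsub by metis
    then obtain g where g: "g \<in> G" "g \<in> closed_segment p' q" unfolding G_def by blast
    then obtain t where t: "0 \<le> t" "t \<le> 1" "g = (1 - t) *\<^sub>R p' + t *\<^sub>R q"
      unfolding in_segment by blast
    have "t \<noteq> 1" using t g qM unfolding G_def by auto
    then have t1: "1 - t \<noteq> 0" by simp
    have pe: "p' = (1 / (1 - t)) *\<^sub>R g + (- t / (1 - t)) *\<^sub>R q"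
    proof -
      have "p' = (1 / (1 - t)) *\<^sub>R ((1 - t) *\<^sub>R p')" using t1 by simp
      also have "\<dots> = (1 / (1 - t)) *\<^sub>R (g - t *\<^sub>R q)" using t(3) by simp
      also have "\<dots> = (1 / (1 - t)) *\<^sub>R g + (- t / (1 - t)) *\<^sub>R q"
        by (simp add: scaleR_diff_right)
      finally show ?thesis .
    qed
    have "g \<in> insert q G" using g(1) by simp
    then have "g \<in> affine hull (insert q G)" by (rule hull_inc)
    moreover have "q \<in> affine hull (insert q G)" by (rule hull_inc) simp
    moreover have "1 / (1 - t) + - t / (1 - t) = 1" using t1 by (simp add: divide_simps)
    ultimately show "p' \<in> affine hull (insert q G)"
      unfolding pe by (rule mem_affine[OF affine_affine_hull])
  qed
  then have "ball p e \<subseteq> interior (affine hull (insert q G))"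
    by (rule interior_maximal[OF _ open_ball])
  moreover have "p \<in> ball p e" using e(1) by simp
  ultimately have "p \<in> interior (affine hull (insert q G))" by (rule subsetD)
  then have "interior (affine hull (insert q G)) \<noteq> {}" by (metis empty_iff)
  then have "aff_dim (affine hull (insert q G)) = int DIM('a)"
    by (rule aff_dim_nonempty_interior)
  then have "aff_dim (insert q G) = int DIM('a)" by simp
  moreover have "aff_dim (insert q G) \<le> aff_dim G + 1" by (simp add: aff_dim_insert)
  ultimately have "aff_dim G = int DIM('a) - 1" using up by simp
  moreover have "G \<subseteq> M" "G \<subseteq> N" unfolding G_def by auto
  ultimately show ?thesis unfolding dual_adjacent_def using Mm Nm MN(2) GF by blast
qed

lemma dual_cover:
  fixes F :: "'a::euclidean_space set set"
  assumes fp: "fan_poset F P" and da: "dual_adjacent F M N"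
  shows "hasse_adjacent P M N"
proof -
  have cf: "complete_fan F" and po: "partial_order_on (max_cones F) P"
    and ib: "\<forall>C\<in>F. is_interval P {M \<in> max_cones F. C \<subseteq> M}"
    using fp unfolding fan_poset_def by blast+
  have fan: "fan F" using cf unfolding complete_fan_def by blast
  have sub: "P \<subseteq> max_cones F \<times> max_cones F" and rf: "refl_on (max_cones F) P"
    and an: "antisym P"
    using partial_order_onD[OF po] by auto
  have Mm: "M \<in> max_cones F" and Nm: "N \<in> max_cones F" and MN: "M \<noteq> N"
    using da unfolding dual_adjacent_def by blast+
  obtain C where CF: "C \<in> F" and Cd: "aff_dim C = int DIM('a) - 1" and CM: "C \<subseteq> M"
    and CN: "C \<subseteq> N"
    using da unfolding dual_adjacent_def by blast
  have MF: "M \<in> F" and NF: "N \<in> F" using Mm Nm unfolding max_cones_def by auto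
  obtain a b where ab: "a \<noteq> 0" "affine hull C = {x. a \<bullet> x = b}"
  proof -
    have "aff_dim C = int (DIM('a) - 1)" using Cd DIM_positive[where 'a='a] by (simp add: of_nat_diff)
    from aff_dim_eq_hyperplane[THEN iffD1, OF this] show ?thesis using that by blast
  qed
  define H where "H = affine hull C"
  have CH: "C \<subseteq> H" unfolding H_def by (rule hull_subset)
  have cC: "convex C" "C \<noteq> {}" using fan_props(2,4)[OF fan CF] by auto
  then have "rel_interior C \<noteq> {}" using rel_interior_eq_empty by blast
  then obtain x where x: "x \<in> rel_interior C" by blast
  have xC: "x \<in> C" using x rel_interior_subset by blast
  then have xH: "a \<bullet> x = b" using CH ab(2) unfolding H_def by blast
  obtain r where r: "r > 0" "\<forall>y\<in>ball x r. \<exists>G\<in>F. x \<in> G \<and> y \<in> G"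
    using local_cover[OF cf] by blast
  define S where "S = {K \<in> max_cones F. C \<subseteq> K}"
  have SF: "S \<subseteq> F" unfolding S_def max_cones_def by blast
  have finS: "finite S" using fan_finite[OF fan] SF finite_subset by blast
  have cover: "\<forall>y\<in>ball x r. \<exists>K\<in>S. y \<in> K"
  proof
    fix y assume "y \<in> ball x r"
    then obtain G where G: "G \<in> F" "x \<in> G" "y \<in> G" using r by blast
    have "C \<subseteq> G" by (rule relint_sub[OF fan CF x G(1,2)])
    obtain K where K: "K \<in> max_cones F" "G \<subseteq> K" using below_max[OF fan G(1)] by blast
    have "K \<in> S" unfolding S_def using K \<open>C \<subseteq> G\<close> by blast
    then show "\<exists>K\<in>S. y \<in> K" using K G(3) by blast
  qed
  have Cface: "C face_of K" if "K \<in> F" "C \<subseteq> K" for K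
  proof -
    have "(C \<inter> K) face_of K" using fan_inter_face(2)[OF fan CF that(1)] .
    moreover have "C \<inter> K = C" using that(2) by blast
    ultimately show ?thesis by simp
  qed
  have notH: "\<exists>p\<in>K. a \<bullet> p \<noteq> b" if KS: "K \<in> S" for K
  proof (rule ccontr)
    assume "\<not> (\<exists>p\<in>K. a \<bullet> p \<noteq> b)"
    then have "K \<subseteq> H" unfolding H_def ab(2) by blast
    then have "aff_dim K \<le> aff_dim H" by (rule aff_dim_subset)
    then have le: "aff_dim K \<le> aff_dim C" unfolding H_def by simp
    have KF: "K \<in> F" and CK: "C \<subseteq> K" using KS SF unfolding S_def by blast+
    have cK: "convex K" using fan_props(2)[OF fan KF] .
    have "C = K"
    proof (rule ccontr)
      assume "C \<noteq> K"
      then have "aff_dim C < aff_dim K" using face_of_aff_dim_lt[OF cK Cface[OF KF CK]] by blast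
      then show False using le by simp
    qed
    then have Cm: "C \<in> max_cones F" using KS unfolding S_def by blast
    have "M = C" using Cm MF CM unfolding max_cones_def by blast
    moreover have "N = C" using Cm NF CN unfolding max_cones_def by blast
    ultimately show False using MN by simp
  qed
  have side: "(\<exists>y\<in>K \<inter> ball x r. a \<bullet> y > b) \<or> (\<exists>y\<in>K \<inter> ball x r. (- a) \<bullet> y > - b)"
    if KS: "K \<in> S" for K
  proof -
    obtain p where p: "p \<in> K" "a \<bullet> p \<noteq> b" using notH[OF KS] by blast
    have KF: "K \<in> F" and CK: "C \<subseteq> K" using KS SF unfolding S_def by blast+
    have cK: "convex K" using fan_props(2)[OF fan KF] .
    have xK: "x \<in> K" using xC CK by blast
    have px: "p \<noteq> x" using p(2) xH by blast
    then have np: "norm (p - x) > 0" by simp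
    define s where "s = min 1 (r / (2 * norm (p - x)))"
    have s0: "s > 0" unfolding s_def using r(1) np by simp
    have s1: "s \<le> 1" unfolding s_def by simp
    have s2: "s * norm (p - x) < r"
    proof -
      have "s \<le> r / (2 * norm (p - x))" unfolding s_def by simp
      then have "s * norm (p - x) \<le> r / (2 * norm (p - x)) * norm (p - x)"
        by (rule mult_right_mono[OF _ norm_ge_zero])
      also have "\<dots> = r / 2" using np by (simp add: field_simps)
      finally show ?thesis using r(1) by simp
    qed
    define y where "y = (1 - s) *\<^sub>R x + s *\<^sub>R p"
    have yK: "y \<in> K" unfolding y_def
      by (rule convexD[OF cK xK p(1)]) (use s0 s1 in auto)
    have "y - x = s *\<^sub>R (p - x)" unfolding y_def
      by (simp add: scaleR_diff_right scaleR_diff_left)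
    then have "dist x y = norm (s *\<^sub>R (p - x))" by (metis dist_commute dist_norm)
    also have "\<dots> = s * norm (p - x)" using s0 by simp
    finally have yb: "y \<in> ball x r" using s2 by simp
    have "a \<bullet> y = (1 - s) * (a \<bullet> x) + s * (a \<bullet> p)" unfolding y_def
      by (simp add: inner_add_right)
    then have ay: "a \<bullet> y = b + s * (a \<bullet> p - b)" using xH
      by (simp add: right_diff_distrib left_diff_distrib)
    show ?thesis
    proof (cases "a \<bullet> p > b")
      case True
      then have "a \<bullet> y > b" using ay s0 by simp
      then show ?thesis using yK yb by blast
    next
      case False
      then have "a \<bullet> p < b" using p(2) by simp
      then have "a \<bullet> y < b" using ay s0 by (simp add: mult_pos_neg)
      then have "(- a) \<bullet> y > - b" by simp
      then show ?thesis using yK yb by blast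
    qed
  qed
  have disj: "K1 \<inter> K2 \<subseteq> H" if K1: "K1 \<in> S" and K2: "K2 \<in> S" and ne: "K1 \<noteq> K2" for K1 K2
  proof -
    have K1F: "K1 \<in> F" and CK1: "C \<subseteq> K1" and K1m: "K1 \<in> max_cones F"
      using K1 SF unfolding S_def by blast+
    have K2F: "K2 \<in> F" and CK2: "C \<subseteq> K2" using K2 SF unfolding S_def by blast+
    define G where "G = K1 \<inter> K2"
    have GK1: "G face_of K1" unfolding G_def using fan_inter_face(1)[OF fan K1F K2F] .
    have cK1: "convex K1" using fan_props(2)[OF fan K1F] .
    have cG: "convex G" using face_of_imp_convex[OF GK1] .
    have CG: "C face_of G"
      using face_of_subset[OF Cface[OF K1F CK1]] CK1 CK2 unfolding G_def by blast
    show ?thesis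
    proof (cases "C = G")
      case True
      then show ?thesis using CH unfolding G_def by simp
    next
      case False
      then have "aff_dim C < aff_dim G" using face_of_aff_dim_lt[OF cG CG] by blast
      then have g: "aff_dim G \<ge> int DIM('a)" using Cd by simp
      have "G = K1"
      proof (rule ccontr)
        assume "G \<noteq> K1"
        then have "aff_dim G < aff_dim K1" using face_of_aff_dim_lt[OF cK1 GK1] by blast
        then show False using g aff_dim_le_DIM[of K1] by simp
      qed
      then have "K1 \<subseteq> K2" unfolding G_def by blast
      then have "K2 = K1" using K1m K2F unfolding max_cones_def by blast
      then show ?thesis using ne by simp
    qed
  qed
  have onesided: "\<not> ((\<exists>y\<in>K1 \<inter> ball x r. c \<bullet> y > e) \<and> (\<exists>y\<in>K2 \<inter> ball x r. c \<bullet> y > e))"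
    if K1: "K1 \<in> S" and K2: "K2 \<in> S" and ne: "K1 \<noteq> K2"
      and ce: "\<forall>y. c \<bullet> y > e \<longrightarrow> a \<bullet> y \<noteq> b" for K1 K2 c e
  proof
    assume h: "(\<exists>y\<in>K1 \<inter> ball x r. c \<bullet> y > e) \<and> (\<exists>y\<in>K2 \<inter> ball x r. c \<bullet> y > e)"
    define B where "B = ball x r \<inter> {y. c \<bullet> y > e}"
    have "convex B" unfolding B_def by (intro convex_Int convex_ball convex_halfspace_gt)
    then have conB: "connected B" by (rule convex_connected)
    define A2 where "A2 = \<Union>(S - {K1})"
    have K1F: "K1 \<in> F" using K1 SF by blast
    have c1: "closed K1" using fan_props(1)[OF fan K1F] .
    have "\<forall>K\<in>S - {K1}. closed K" using SF fan_props(1)[OF fan] by blast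
    moreover have "finite (S - {K1})" using finS by simp
    ultimately have c2: "closed A2" unfolding A2_def by (intro closed_Union) auto
    have cov: "B \<subseteq> K1 \<union> A2"
    proof
      fix y assume "y \<in> B"
      then have "y \<in> ball x r" unfolding B_def by blast
      then obtain K where "K \<in> S" "y \<in> K" using cover by blast
      then show "y \<in> K1 \<union> A2" unfolding A2_def by blast
    qed
    have dj: "K1 \<inter> A2 \<inter> B = {}"
    proof (rule ccontr)
      assume "K1 \<inter> A2 \<inter> B \<noteq> {}"
      then obtain y K where y: "y \<in> K1" "K \<in> S" "K \<noteq> K1" "y \<in> K" "y \<in> B"
        unfolding A2_def by blast
      have "y \<in> H" using disj[OF K1 y(2)] y(3,1,4) by blast
      then have "a \<bullet> y = b" unfolding H_def ab(2) by blast
      moreover have "c \<bullet> y > e" using y(5) unfolding B_def by blast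
      ultimately show False using ce by blast
    qed
    have n1: "K1 \<inter> B \<noteq> {}" using h unfolding B_def by blast
    have "K2 \<subseteq> A2" unfolding A2_def using K2 ne by blast
    then have n2: "A2 \<inter> B \<noteq> {}" using h unfolding B_def by blast
    show False using conB[unfolded connected_closed] c1 c2 cov dj n1 n2 by blast
  qed
  have ce1: "\<forall>y. a \<bullet> y > b \<longrightarrow> a \<bullet> y \<noteq> b" by simp
  have ce2: "\<forall>y. (- a) \<bullet> y > - b \<longrightarrow> a \<bullet> y \<noteq> b" by simp
  have MS: "M \<in> S" and NS: "N \<in> S" unfolding S_def using Mm Nm CM CN by blast+
  have Ssub: "S \<subseteq> {M, N}"
  proof
    fix K assume KS: "K \<in> S"
    show "K \<in> {M, N}"
    proof (rule ccontr)
      assume "K \<notin> {M, N}"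
      then have KM: "K \<noteq> M" and KN: "K \<noteq> N" by auto
      note o1 = onesided[OF _ _ _ ce1] and o2 = onesided[OF _ _ _ ce2]
      show False
        using side[OF MS] side[OF NS] side[OF KS]
          o1[OF MS NS MN] o2[OF MS NS MN] o1[OF MS KS KM[symmetric]] o2[OF MS KS KM[symmetric]]
          o1[OF NS KS KN[symmetric]] o2[OF NS KS KN[symmetric]]
        by blast
    qed
  qed
  then have Seq: "S = {M, N}" using MS NS by blast
  have "is_interval P S" using ib CF unfolding S_def by blast
  then obtain u v where uv: "(u, v) \<in> P" and Si: "S = interval P u v"
    unfolding is_interval_def by blast
  have um: "u \<in> max_cones F" and vm: "v \<in> max_cones F" using sub uv by blast+
  have "(u, u) \<in> P" "(v, v) \<in> P" using rf um vm unfolding refl_on_def by blast+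
  then have "u \<in> interval P u v" "v \<in> interval P u v" using uv unfolding interval_def by blast+
  then have uvS: "u \<in> {M, N}" "v \<in> {M, N}" using Si Seq by blast+
  have "u \<noteq> v"
  proof
    assume "u = v"
    have "interval P u v \<subseteq> {u}"
    proof
      fix z assume "z \<in> interval P u v"
      then have "(u, z) \<in> P" "(z, u) \<in> P" using \<open>u = v\<close> unfolding interval_def by blast+
      then show "z \<in> {u}" using an unfolding antisym_def by blast
    qed
    then have "M = N" using Si Seq by blast
    then show False using MN by simp
  qed
  have "\<not> (\<exists>z. (u, z) \<in> P \<and> (z, v) \<in> P \<and> z \<noteq> u \<and> z \<noteq> v)"
  proof
    assume "\<exists>z. (u, z) \<in> P \<and> (z, v) \<in> P \<and> z \<noteq> u \<and> z \<noteq> v"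
    then obtain z where z: "(u, z) \<in> P" "(z, v) \<in> P" "z \<noteq> u" "z \<noteq> v" by blast
    then have "z \<in> interval P u v" unfolding interval_def by blast
    then have "z \<in> {M, N}" using Si Seq by blast
    then show False using z(3,4) uvS \<open>u \<noteq> v\<close> by blast
  qed
  then have cuv: "covers P u v" using uv \<open>u \<noteq> v\<close> unfolding covers_def by blast
  have "(u = M \<and> v = N) \<or> (u = N \<and> v = M)" using uvS \<open>u \<noteq> v\<close> by blast
  then show ?thesis unfolding hasse_adjacent_def using cuv by blast
qed

theorem proposition3p3:
  fixes F :: "'a::euclidean_space set set" and P :: "('a set \<times> 'a set) set"
  assumes "fan_poset F P"
  shows "\<forall>M\<in>max_cones F. \<forall>N\<in>max_cones F. hasse_adjacent P M N \<longleftrightarrow> dual_adjacent F M N"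
proof (intro ballI iffI)
  fix M N assume "M \<in> max_cones F" "N \<in> max_cones F"
  {
    assume "hasse_adjacent P M N"
    then show "dual_adjacent F M N"
    proof (unfold hasse_adjacent_def, elim disjE)
      assume "covers P M N" then show ?thesis by (rule cover_dual[OF assms])
    next
      assume "covers P N M"
      then have "dual_adjacent F N M" by (rule cover_dual[OF assms])
      then show ?thesis unfolding dual_adjacent_def by blast
    qed
  next
    assume "dual_adjacent F M N"
    then show "hasse_adjacent P M N" by (rule dual_cover[OF assms])
  }
qed

end
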